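(* For every integer $p\ge1$ and every complex $z$ with $e^z\ne1$, $$\sum_{n\ge0}\mathcal{B}_{n,p}\frac{z^n}{n!}=\exp(e^z-1)\,(-1)^{p-1}p\left(e^{-z}\frac{d}{dz}\right)^{p-1}\left(\frac{1-\exp(1-e^z)}{e^z-1}\right),$$ where $\left(e^{-z}\frac{d}{dz}\right)^{p-1}$ denotes the $(p-1)$-fold iterate of the operator $g\mapsto e^{-z}g'(z)$.
   Context: For an integer $p\ge0$, the $p$-Bell numbers $\mathcal{B}_{n,p}$ are defined by $\sum_{n\ge0}\mathcal{B}_{n,p}\frac{z^n}{n!}=\sum_{n\ge0}\binom{n+p}{p}^{-1}\frac{(e^z-1)^n}{n!}$ (an entire function of $z$ whose Taylor series is the left side). *)

theory Defs
  imports "HOL-Analysis.Analysis"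
begin

definition pBell_egf :: "nat \<Rightarrow> complex \<Rightarrow> complex" where
  "pBell_egf p z = (\<Sum>k. (exp z - 1) ^ k / (of_nat ((k + p) choose p) * fact k))"

text \<open>The p-Bell number B_{n,p}: n-th Taylor coefficient at 0 times n!, i.e.
  the n-th derivative at 0 of the entire function F_p.\<close>
definition pBell :: "nat \<Rightarrow> nat \<Rightarrow> complex" where
  "pBell n p = (deriv ^^ n) (pBell_egf p) 0"

definition expD :: "(complex \<Rightarrow> complex) \<Rightarrow> complex \<Rightarrow> complex" where
  "expD g = (\<lambda>z. exp (- z) * deriv g z)"

end

theory Submission imports Defs "HOL-Complex_Analysis.Cauchy_Integral_Formula" begin

lemma beta_sum:
  "(\<Sum>k\<le>n. (-1)^k * of_nat (n choose k) / of_nat (m+k+1) :: 'a::field_char_0)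
     = fact m * fact n / fact (m+n+1)"
proof (induction n arbitrary: m)
  case 0
  have h: "(of_nat (Suc m)::'a) \<noteq> 0" by (rule of_nat_neq_0)
  have "fact (m+0+1) = (of_nat (Suc m)::'a) * fact m" by (simp add: fact_Suc del: of_nat_Suc)
  then show ?case using h by (simp del: of_nat_Suc add: divide_simps)
next
  case (Suc n)
  define g :: "nat \<Rightarrow> nat \<Rightarrow> 'a" where "g m j = (-1)^j * of_nat (n choose j) / of_nat (m+j+1)" for m j
  have "(\<Sum>k\<le>Suc n. (-1)^k * of_nat (Suc n choose k) / of_nat (m+k+1) :: 'a)
      = 1 / of_nat (m+1) + (\<Sum>k\<le>n. (-1)^(Suc k) * of_nat (Suc n choose Suc k) / of_nat (m+Suc k+1))"
    by (subst sum.atMost_Suc_shift) simp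
  also have "(\<Sum>k\<le>n. (-1)^(Suc k) * of_nat (Suc n choose Suc k) / of_nat (m+Suc k+1) :: 'a)
      = (\<Sum>k\<le>n. g m (Suc k)) - (\<Sum>k\<le>n. g (Suc m) k)"
    unfolding sum_subtractf[symmetric]
    by (intro sum.cong refl) (simp add: g_def ring_distribs add_divide_distrib diff_divide_distrib algebra_simps)
  also have "(\<Sum>k\<le>n. g m (Suc k)) = (\<Sum>k\<le>n. g m k) - g m 0"
  proof -
    have "(\<Sum>k\<le>Suc n. g m k) = g m 0 + (\<Sum>k\<le>n. g m (Suc k))" by (rule sum.atMost_Suc_shift)
    moreover have "(\<Sum>k\<le>Suc n. g m k) = (\<Sum>k\<le>n. g m k)" by (simp add: g_def)
    ultimately show ?thesis by (simp add: algebra_simps)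
  qed
  also have "(\<Sum>k\<le>n. g m k) = fact m * fact n / fact (m+n+1)" using Suc.IH[of m] by (simp add: g_def)
  also have "(\<Sum>k\<le>n. g (Suc m) k) = fact (Suc m) * fact n / fact (Suc m+n+1)" using Suc.IH[of "Suc m"] by (simp add: g_def)
  also have "1 / of_nat (m+1) + (fact m * fact n / fact (m+n+1) - g m 0 - fact (Suc m) * fact n / fact (Suc m+n+1))
     = (fact m * fact n / fact (m+n+1) - fact (Suc m) * fact n / fact (Suc m+n+1) :: 'a)"
    by (simp add: g_def)
  also have "\<dots> = fact m * fact (Suc n) / fact (m + Suc n + 1)"
  proof -
    have e1: "Suc m + n + 1 = Suc (m+n+1)" "m + Suc n + 1 = Suc (m+n+1)" by simp_all
    have f1: "fact (Suc m + n + 1) = (of_nat (m+n+2) :: 'a) * fact (m+n+1)"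
      unfolding e1 fact_Suc by simp
    have f2: "fact (m + Suc n + 1) = (of_nat (m+n+2) :: 'a) * fact (m+n+1)"
      unfolding e1 fact_Suc by simp
    have f3: "fact (Suc m) = (of_nat (m+1) :: 'a) * fact m" "fact (Suc n) = (of_nat (n+1) :: 'a) * fact n"
      by (simp_all add: fact_Suc del: of_nat_Suc)
    have nz1: "(of_nat (m+n+2) :: 'a) \<noteq> 0"
      using of_nat_neq_0[of "Suc (m+n)", where 'a='a] by simp
    have nz2: "fact (m+n+1) \<noteq> (0::'a)" by (rule fact_nonzero)
    note nz = nz1 nz2
    show ?thesis unfolding f1 f2 f3 using nz
      by (simp add: divide_simps del: of_nat_add) (simp add: algebra_simps)
  qed
  finally show ?case .
qed

definition cH :: "nat \<Rightarrow> nat \<Rightarrow> complex" where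
  "cH m k = (-1)^(m+k) / (fact k * of_nat (m+k+1))"
definition Hf :: "nat \<Rightarrow> complex \<Rightarrow> complex" where
  "Hf m u = (\<Sum>k. cH m k * u^k)"
definition cG :: "nat \<Rightarrow> nat \<Rightarrow> complex" where
  "cG p k = 1 / (of_nat ((k+p) choose p) * fact k)"
definition Gf :: "nat \<Rightarrow> complex \<Rightarrow> complex" where
  "Gf p u = (\<Sum>k. cG p k * u^k)"

lemma summable_expnorm: "summable (\<lambda>k. norm (y::complex) ^ k / fact k)"
  using summable_exp[of "norm y"] by (simp add: field_simps)

lemma cH_bound: "norm (cH m k * y^k) \<le> norm y ^ k / fact k"
proof -
  have "norm (cH m k) = 1 / (fact k * of_nat (m+k+1))"
    unfolding cH_def norm_divide norm_mult norm_power norm_minus_cancel norm_one norm_of_nat norm_fact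
    by simp
  also have "\<dots> \<le> 1 / fact k"
    by (intro divide_left_mono) auto
  finally have "norm (cH m k) \<le> 1 / fact k" .
  from mult_left_mono[OF this, of "norm y ^ k"] show ?thesis
    by (simp add: norm_mult norm_power mult.commute)
qed

lemma cG_bound: "norm (cG p k * y^k) \<le> norm y ^ k / fact k"
proof -
  have c0: "(k+p) choose p \<ge> 1"
    using zero_less_binomial[of p "k+p"] by linarith
  have c: "real ((k+p) choose p) \<ge> 1"
    using c0 by simp
  have "norm (cG p k) = 1 / (fact k * real ((k+p) choose p))"
    unfolding cG_def by (simp add: norm_divide norm_mult)
  also have "\<dots> \<le> 1 / fact k"
    using c by (intro divide_left_mono) auto
  finally have "norm (cG p k) \<le> 1 / fact k" .
  from mult_left_mono[OF this, of "norm y ^ k"] show ?thesis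
    by (simp add: norm_mult norm_power mult.commute)
qed

lemma summable_cH: "summable (\<lambda>k. norm (cH m k * y^k))" "summable (\<lambda>k. cH m k * y^k)"
  using summable_comparison_test[OF _ summable_expnorm[of y], of "\<lambda>k. norm (cH m k * y^k)"]
    summable_comparison_test[OF _ summable_expnorm[of y], of "\<lambda>k. cH m k * y^k"] cH_bound
  by auto

lemma summable_cG: "summable (\<lambda>k. norm (cG p k * y^k))" "summable (\<lambda>k. cG p k * y^k)"
  using summable_comparison_test[OF _ summable_expnorm[of y], of "\<lambda>k. norm (cG p k * y^k)"]
    summable_comparison_test[OF _ summable_expnorm[of y], of "\<lambda>k. cG p k * y^k"] cG_bound
  by auto

lemma diffs_cH: "diffs (cH m) = cH (Suc m)"
proof
  fix k
  have "fact (Suc k) = (of_nat (Suc k) :: complex) * fact k" by (rule fact_Suc)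
  then show "diffs (cH m) k = cH (Suc m) k"
    unfolding diffs_def cH_def
    by (simp add: field_simps del: of_nat_Suc)
qed

lemma Hf_deriv: "(Hf m has_field_derivative Hf (Suc m) u) (at u)"
proof -
  have "((\<lambda>x. \<Sum>n. cH m n * x^n) has_field_derivative (\<Sum>n. diffs (cH m) n * u^n)) (at u)"
    by (rule termdiffs_strong_converges_everywhere) (rule summable_cH(2))
  then show ?thesis unfolding diffs_cH Hf_def[abs_def] .
qed

lemma Gf_holo: "Gf p holomorphic_on UNIV"
proof -
  have "\<And>u. ((\<lambda>x. \<Sum>n. cG p n * x^n) has_field_derivative (\<Sum>n. diffs (cG p) n * u^n)) (at u)"
    by (rule termdiffs_strong_converges_everywhere) (rule summable_cG(2))
  then show ?thesis unfolding Gf_def[abs_def] holomorphic_on_def field_differentiable_def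
    by (meson has_field_derivative_at_within)
qed

lemma exp_sums_c: "(\<lambda>n. (u::complex)^n / fact n) sums exp u"
  using exp_converges[of u] by (simp add: scaleR_conv_of_real divide_inverse mult.commute)

lemma t1: "(\<lambda>n. (-(u::complex))^(Suc n) / fact (Suc n)) sums (exp (-u) - 1)"
proof -
  have "(\<lambda>n. (-u)^n / fact n) sums ((exp (-u) - 1) + (-u)^0 / fact 0)" using exp_sums_c[of "-u"] by simp
  then show ?thesis by (rule sums_Suc_iff[of "\<lambda>n. (-u)^n / fact n", THEN iffD2])
qed
lemma t2: "cH 0 n = (-1)^n / fact (Suc n)"
  unfolding cH_def fact_Suc by (simp add: mult.commute)
lemma t3: "(-1)^n * (u::complex)^(Suc n) / fact (Suc n) = - ((-u)^(Suc n) / fact (Suc n))"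
  by (simp add: power_minus[of u])
lemma Hf0: "Hf 0 u * u = 1 - exp (-u)"
proof -
  from sums_minus[OF t1[of u]] have s1: "(\<lambda>n. - ((-u)^(Suc n) / fact (Suc n))) sums (1 - exp (-u))"
    by simp
  have s2: "(\<lambda>n. cH 0 n * u^n * u) sums (Hf 0 u * u)"
    unfolding Hf_def by (rule sums_mult2) (rule summable_sums[OF summable_cH(2)])
  have eq: "cH 0 n * u^n * u = - ((-u)^(Suc n) / fact (Suc n))" for n
  proof -
    have "cH 0 n * u^n * u = (-1)^n * u^(Suc n) / fact (Suc n)"
      unfolding t2 by simp
    also have "\<dots> = - ((-u)^(Suc n) / fact (Suc n))"
      by (rule t3)
    finally show ?thesis .
  qed
  have s3: "(\<lambda>n. cH 0 n * u^n * u) sums (1 - exp (-u))"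
    unfolding eq by (rule s1)
  show ?thesis using s2 s3 by (rule sums_unique2)
qed

lemma aux1: "A \<noteq> 0 \<Longrightarrow> B \<noteq> 0 \<Longrightarrow> C \<noteq> 0 \<Longrightarrow> D \<noteq> 0 \<Longrightarrow>
   s * t / (B * D) / C = s / A * (t * (A / (B * C)) / (D::complex))"
  by (simp add: field_simps)

lemma aux2: "A \<noteq> 0 \<Longrightarrow> s / A * (M * A / F) = s * M / (F::complex)"
  by (simp add: field_simps)

lemma coeff_identity:
  "(-1)^m * of_nat (Suc m) * (\<Sum>i\<le>n. cH m i / fact (n-i)) = cG (Suc m) n"
proof -
  have "(\<Sum>i\<le>n. cH m i / fact (n-i)) = (-1)^m / fact n * (\<Sum>i\<le>n. (-1)^i * of_nat (n choose i) / of_nat (m+i+1))"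
    unfolding sum_distrib_left
  proof (intro sum.cong refl)
    fix i assume "i \<in> {..n}"
    then have "i \<le> n" by simp
    then have b: "(of_nat (n choose i) :: complex) = fact n / (fact i * fact (n - i))"
      by (rule binomial_fact)
    have nz: "(of_nat (m+i+1) :: complex) \<noteq> 0" using of_nat_neq_0[of "m+i", where 'a=complex] by simp
    have "cH m i / fact (n-i) = (-1)^m * (-1)^i / (fact i * of_nat (m+i+1)) / fact (n-i)"
      unfolding cH_def power_add ..
    also have "\<dots> = (-1)^m / fact n * ((-1)^i * (fact n / (fact i * fact (n - i))) / of_nat (m+i+1))"
      by (rule aux1) (simp_all only: fact_nonzero nz not_False_eq_True)
    finally show "cH m i / fact (n-i) = (-1)^m / fact n * ((-1)^i * of_nat (n choose i) / of_nat (m+i+1))"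
      unfolding b .
  qed
  also have "\<dots> = (-1)^m * fact m / fact (m+n+1)"
    unfolding beta_sum by (rule aux2) (rule fact_nonzero)
  finally have "(-1)^m * of_nat (Suc m) * (\<Sum>i\<le>n. cH m i / fact (n-i)) = (-1)^m * of_nat (Suc m) * ((-1)^m * fact m / fact (m+n+1))"
    by simp
  also have "\<dots> = ((-1)^m * (-1)^m) * (of_nat (Suc m) * fact m) / fact (m+n+1)"
    by (simp only: mult.assoc mult.left_commute times_divide_eq_right)
  also have "\<dots> = fact (Suc m) / fact (m+n+1)"
    by (simp only: power_add[symmetric] fact_Suc[symmetric]) simp
  also have "\<dots> = cG (Suc m) n"
  proof -
    have b: "(of_nat ((n + Suc m) choose Suc m) :: complex) = fact (n + Suc m) / (fact (Suc m) * fact n)"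
      using binomial_fact[of "Suc m" "n + Suc m"] by simp
    have e: "n + Suc m = m + n + 1" by simp
    have "cG (Suc m) n = 1 / (of_nat ((n + Suc m) choose Suc m) * fact n)" by (simp only: cG_def)
    also have "\<dots> = fact (Suc m) / fact (m+n+1)" unfolding b
    proof (simp only: e)
      have aux: "C \<noteq> 0 \<Longrightarrow> A \<noteq> 0 \<Longrightarrow> B \<noteq> 0 \<Longrightarrow> 1/(A/(B*C)*C) = (B::complex)/A" for A B C
        by (simp add: field_simps)
      show "1 / (fact (m + n + 1) / (fact (Suc m) * fact n) * fact n) = (fact (Suc m) / fact (m + n + 1) :: complex)"
        by (rule aux) (simp_all only: fact_nonzero not_False_eq_True)
    qed
    finally show ?thesis by simp
  qed
  finally show ?thesis .
qed

lemma Hf_exp: "exp u * ((-1)^m * of_nat (Suc m) * Hf m u) = Gf (Suc m) u"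
proof -
  have "(\<lambda>k. \<Sum>i\<le>k. (cH m i * u^i) * (u^(k-i) / fact (k-i))) sums ((\<Sum>k. cH m k * u^k) * (\<Sum>k. u^k / fact k))"
    by (rule Cauchy_product_sums) (use summable_cH(1) summable_expnorm in \<open>simp_all add: norm_divide norm_power norm_mult\<close>)
  then have "(\<lambda>k. \<Sum>i\<le>k. (cH m i * u^i) * (u^(k-i) / fact (k-i))) sums (Hf m u * exp u)"
    unfolding Hf_def using sums_unique[OF exp_sums_c[of u]] by simp
  from sums_mult[OF this, of "(-1)^m * of_nat (Suc m)"]
  have "(\<lambda>k. (-1)^m * of_nat (Suc m) * (\<Sum>i\<le>k. (cH m i * u^i) * (u^(k-i) / fact (k-i)))) sums
        ((-1)^m * of_nat (Suc m) * (Hf m u * exp u))" .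
  moreover have "(-1)^m * of_nat (Suc m) * (\<Sum>i\<le>k. (cH m i * u^i) * (u^(k-i) / fact (k-i))) = cG (Suc m) k * u^k" for k
  proof -
    have "(\<Sum>i\<le>k. (cH m i * u^i) * (u^(k-i) / fact (k-i))) = (\<Sum>i\<le>k. cH m i / fact (k-i)) * u^k"
      unfolding sum_distrib_right
    proof (intro sum.cong refl)
      fix i assume "i \<in> {..k}"
      then have "u^i * u^(k-i) = u^k" by (simp add: power_add[symmetric])
      then show "(cH m i * u^i) * (u^(k-i) / fact (k-i)) = cH m i / fact (k-i) * u^k"
        by (metis (no_types, lifting) mult.assoc mult.commute times_divide_eq_left times_divide_eq_right)
    qed
    then show ?thesis using coeff_identity[of m k] by (metis mult.assoc)
  qed
  ultimately have "(\<lambda>k. cG (Suc m) k * u^k) sums ((-1)^m * of_nat (Suc m) * (Hf m u * exp u))" by simp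
  then have "Gf (Suc m) u = (-1)^m * of_nat (Suc m) * (Hf m u * exp u)"
    unfolding Gf_def by (rule sums_unique[symmetric])
  then show ?thesis by (simp add: algebra_simps)
qed

lemma iter_expD:
  assumes "exp w \<noteq> 1"
  shows "(expD ^^ m) (\<lambda>w. (1 - exp (1 - exp w)) / (exp w - 1)) w = Hf m (exp w - 1)"
  using assms
proof (induction m arbitrary: w)
  case 0
  have u: "exp w - 1 \<noteq> 0" using 0 by simp
  have "Hf 0 (exp w - 1) = (1 - exp (-(exp w - 1))) / (exp w - 1)"
    using Hf0[of "exp w - 1"] u by (simp add: field_simps)
  then show ?case by simp
next
  case (Suc m)
  define S where "S = {w::complex. exp w \<noteq> 1}"
  have S: "open S" unfolding S_def
    by (rule open_Collect_neq) (auto intro: continuous_intros)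
  have "((\<lambda>w. exp w - 1) has_field_derivative exp w) (at w)"
    by (auto intro!: derivative_eq_intros)
  from DERIV_chain2[OF Hf_deriv this]
  have d: "((\<lambda>w. Hf m (exp w - 1)) has_field_derivative Hf (Suc m) (exp w - 1) * exp w) (at w)" .
  have "((expD ^^ m) (\<lambda>w. (1 - exp (1 - exp w)) / (exp w - 1)) has_field_derivative Hf (Suc m) (exp w - 1) * exp w) (at w)"
    by (rule has_field_derivative_transform_within_open[OF d S]) (use Suc in \<open>auto simp: S_def\<close>)
  then have "deriv ((expD ^^ m) (\<lambda>w. (1 - exp (1 - exp w)) / (exp w - 1))) w = Hf (Suc m) (exp w - 1) * exp w"
    by (rule DERIV_imp_deriv)
  moreover have "(expD ^^ Suc m) (\<lambda>w. (1 - exp (1 - exp w)) / (exp w - 1)) w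
     = exp (-w) * deriv ((expD ^^ m) (\<lambda>w. (1 - exp (1 - exp w)) / (exp w - 1))) w"
    by (simp only: funpow.simps o_apply expD_def)
  ultimately show ?case
    by (simp add: exp_minus_inverse mult.assoc[symmetric] mult.commute[of "exp (-w)"])
qed

lemma Gf_diff: "Gf p field_differentiable (at u)"
  using Gf_holo[of p] unfolding holomorphic_on_def by auto

lemma F_eq: "pBell_egf p = (\<lambda>z. Gf p (exp z - 1))"
proof
  fix z
  show "pBell_egf p z = Gf p (exp z - 1)"
    unfolding pBell_egf_def Gf_def cG_def by simp
qed

lemma F_holo: "pBell_egf p holomorphic_on UNIV"
proof -
  have "(\<lambda>z. Gf p (exp z - 1)) field_differentiable (at z)" for z
  proof -
    obtain D where D: "(Gf p has_field_derivative D) (at (exp z - 1))"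
      using Gf_diff unfolding field_differentiable_def by blast
    have "((\<lambda>w. exp w - 1) has_field_derivative exp z) (at z)"
      by (auto intro!: derivative_eq_intros)
    from DERIV_chain2[OF D this] show ?thesis unfolding field_differentiable_def by blast
  qed
  then show ?thesis unfolding F_eq holomorphic_on_def
    by (simp add: field_differentiable_at_within)
qed

theorem mainTheorem6:
  fixes p :: nat and z :: complex
  assumes "p \<ge> 1" and "exp z \<noteq> 1"
  shows "(\<lambda>n. pBell n p * z ^ n / fact n) sums
           (exp (exp z - 1) * (-1) ^ (p - 1) * of_nat p *
            (expD ^^ (p - 1)) (\<lambda>w. (1 - exp (1 - exp w)) / (exp w - 1)) z)"
proof -
  obtain m where p: "p = Suc m" using assms(1) by (cases p) auto
  have "(\<lambda>n. (deriv ^^ n) (pBell_egf p) 0 / fact n * (z - 0)^n) sums pBell_egf p z"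
    by (rule holomorphic_power_series[where r="norm z + 1"])
       (use holomorphic_on_subset[OF F_holo[of p]] in \<open>auto\<close>)
  then have "(\<lambda>n. pBell n p * z ^ n / fact n) sums pBell_egf p z"
    unfolding pBell_def by simp
  moreover have "pBell_egf p z = exp (exp z - 1) * (-1) ^ (p - 1) * of_nat p *
            (expD ^^ (p - 1)) (\<lambda>w. (1 - exp (1 - exp w)) / (exp w - 1)) z"
    unfolding iter_expD[OF assms(2)] F_eq p using Hf_exp[of "exp z - 1" m]
    by (simp add: mult.assoc)
  ultimately show ?thesis by simp
qed

end
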